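(* Let $n\geqslant 2$ and let $W=S_n$ with its standard Coxeter generators $S=\{s_1,\dots,s_{n-1}\}$. For $k\in\mathbb N$, define $$\phi_k:(S_n,\leqslant_{L^k})\to(W^{S\setminus\{s_1\}},\leqslant_{L^k})\times\cdots\times(W^{S\setminus\{s_{n-1}\}},\leqslant_{L^k})$$ by $\phi_k(w)=(P^{S\setminus\{s_1\}}(w),\dots,P^{S\setminus\{s_{n-1}\}}(w))$, where the target carries the product order. Let $\mathrm{Im}(\phi_k)$ be the image set $\{\phi_k(w):w\in S_n\}$ with the order induced from the product. Then $\mathrm{Im}(\phi_k)$ is isomorphic to the Bruhat order $(S_n,\leqslant)$, for every $k\in\mathbb N$.
   Context: $(W,S)$ is a Coxeter system with length function $\ell$, reflections $T=\{wsw^{-1}:w\in W,\ s\in S\}$ and Bruhat order $\leqslant$. For $k\in\mathbb N$, let $T_k=\{t\in T:(\ell(t)-1)/2\leqslant k\}$. Define $u\leqslant_{L^k}v$ iff $u=v$, or $\ell(u)<\ell(v)$ and there exist $t_1,\dots,t_r\in T_k$ with $u<t_1u<\dots<t_r\cdots t_1u=v$ in the Bruhat order. For $J\subseteq S$, $W^J=\{w\in W:\ell(w)<\ell(ws)\ \forall s\in J\}$. Every $w$ factors uniquely as $w=w^Jw_J$ with $w^J\in W^J$, $w_J\in W_J$ (the subgroup generated by $J$) and $\ell(w)=\ell(w^J)+\ell(w_J)$. Set $P^J(w):=w^J$. *)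

theory Defs
  imports "HOL-Combinatorics.Combinatorics"
begin

text \<open>The symmetric group S_n as permutations of {0..<n}; the Coxeter generator
  s_{i+1} of the paper is the adjacent transposition (i, i+1), for i+1 < n.\<close>

definition Sn :: "nat \<Rightarrow> (nat \<Rightarrow> nat) set" where
  "Sn n = {p. p permutes {..<n}}"

definition sgen :: "nat \<Rightarrow> nat \<Rightarrow> nat" where
  "sgen i = transpose i (Suc i)"

definition gens :: "nat \<Rightarrow> (nat \<Rightarrow> nat) set" where
  "gens n = {sgen i | i. Suc i < n}"

definition word_prod :: "(nat \<Rightarrow> nat) list \<Rightarrow> nat \<Rightarrow> nat" where
  "word_prod xs = foldr (\<circ>) xs id"

definition clen :: "nat \<Rightarrow> (nat \<Rightarrow> nat) \<Rightarrow> nat" where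
  "clen n w = (LEAST m. \<exists>xs. set xs \<subseteq> gens n \<and> length xs = m \<and> word_prod xs = w)"

definition refls :: "nat \<Rightarrow> (nat \<Rightarrow> nat) set" where
  "refls n = {w \<circ> s \<circ> inv w | w s. w \<in> Sn n \<and> s \<in> gens n}"

definition bruhat_le :: "nat \<Rightarrow> (nat \<Rightarrow> nat) \<Rightarrow> (nat \<Rightarrow> nat) \<Rightarrow> bool" where
  "bruhat_le n u v \<longleftrightarrow> u \<in> Sn n \<and> v \<in> Sn n \<and>
     (\<lambda>x y. \<exists>t\<in>refls n. y = t \<circ> x \<and> clen n x < clen n y)\<^sup>*\<^sup>* u v"

definition bruhat_less :: "nat \<Rightarrow> (nat \<Rightarrow> nat) \<Rightarrow> (nat \<Rightarrow> nat) \<Rightarrow> bool" where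
  "bruhat_less n u v \<longleftrightarrow> bruhat_le n u v \<and> u \<noteq> v"

definition Tk :: "nat \<Rightarrow> nat \<Rightarrow> (nat \<Rightarrow> nat) set" where
  "Tk n k = {t \<in> refls n. (real (clen n t) - 1) / 2 \<le> real k}"

inductive lchain :: "nat \<Rightarrow> nat \<Rightarrow> (nat \<Rightarrow> nat) \<Rightarrow> (nat \<Rightarrow> nat) \<Rightarrow> bool"
  for n k where
  base: "lchain n k u u"
| step: "t \<in> Tk n k \<Longrightarrow> bruhat_less n u (t \<circ> u) \<Longrightarrow> lchain n k (t \<circ> u) v \<Longrightarrow> lchain n k u v"

definition lek :: "nat \<Rightarrow> nat \<Rightarrow> (nat \<Rightarrow> nat) \<Rightarrow> (nat \<Rightarrow> nat) \<Rightarrow> bool" where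
  "lek n k u v \<longleftrightarrow> u \<in> Sn n \<and> v \<in> Sn n \<and>
     (u = v \<or> (clen n u < clen n v \<and> lchain n k u v))"

definition WJ :: "nat \<Rightarrow> (nat \<Rightarrow> nat) set \<Rightarrow> (nat \<Rightarrow> nat) set" where
  "WJ n J = {word_prod xs | xs. set xs \<subseteq> J}"

definition WupJ :: "nat \<Rightarrow> (nat \<Rightarrow> nat) set \<Rightarrow> (nat \<Rightarrow> nat) set" where
  "WupJ n J = {w \<in> Sn n. \<forall>s\<in>J. clen n w < clen n (w \<circ> s)}"

definition PJ :: "nat \<Rightarrow> (nat \<Rightarrow> nat) set \<Rightarrow> (nat \<Rightarrow> nat) \<Rightarrow> nat \<Rightarrow> nat" where
  "PJ n J w = (THE u. u \<in> WupJ n J \<and>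
      (\<exists>v\<in>WJ n J. w = u \<circ> v \<and> clen n w = clen n u + clen n v))"

definition phi :: "nat \<Rightarrow> (nat \<Rightarrow> nat) \<Rightarrow> (nat \<Rightarrow> nat) list" where
  "phi n w = map (\<lambda>i. PJ n (gens n - {sgen i}) w) [0..<n-1]"

end

theory Submission
  imports Defs
begin

lemma Sn_iff: "w \<in> Sn n \<longleftrightarrow> w permutes {..<n}" by (simp add: Sn_def)

lemma sgen_apply: "sgen j x = (if x = j then Suc j else if x = Suc j then j else x)"
  by (simp add: sgen_def transpose_def)

lemma sgen_perm: "Suc j < n \<Longrightarrow> sgen j permutes {..<n}"
  unfolding sgen_def by (rule permutes_swap_id) auto

lemma sgen_invol: "sgen j \<circ> sgen j = id" "sgen j (sgen j x) = x"
  by (auto simp: sgen_def)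

lemma sgen_order: "x \<noteq> y \<Longrightarrow> \<not>(x = j \<and> y = Suc j) \<Longrightarrow> \<not>(x = Suc j \<and> y = j) \<Longrightarrow>
   (sgen j x < sgen j y \<longleftrightarrow> x < y)"
  by (auto simp: sgen_apply)

lemma perm_inv_lt: "w permutes {..<n} \<Longrightarrow> x < n \<Longrightarrow> inv w x < n"
  by (metis lessThan_iff permutes_in_image permutes_inverses(1))

lemma perm_lt: "w permutes {..<n} \<Longrightarrow> x < n \<Longrightarrow> w x < n"
  by (metis lessThan_iff permutes_in_image)

definition invs :: "nat \<Rightarrow> (nat \<Rightarrow> nat) \<Rightarrow> (nat \<times> nat) set" where
  "invs n w = {(r,s). r < s \<and> s < n \<and> w s < w r}"

definition ninv :: "nat \<Rightarrow> (nat \<Rightarrow> nat) \<Rightarrow> nat" where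
  "ninv n w = card (invs n w)"

lemma finite_invs: "finite (invs n w)"
proof -
  have "invs n w \<subseteq> {..<n} \<times> {..<n}" by (auto simp: invs_def)
  then show ?thesis by (rule finite_subset) auto
qed

lemma invs_sgen_left:
  assumes w: "w permutes {..<n}" and pq: "p < q" "q < n" and wp: "w p = j" and wq: "w q = Suc j"
  shows "invs n (sgen j \<circ> w) = insert (p,q) (invs n w)" "(p,q) \<notin> invs n w"
proof -
  have inj: "inj w" using w by (rule permutes_inj)
  show "(p,q) \<notin> invs n w" using wp wq by (auto simp: invs_def)
  show "invs n (sgen j \<circ> w) = insert (p,q) (invs n w)"
  proof (rule set_eqI, clarify)
    fix r s
    show "((r,s) \<in> invs n (sgen j \<circ> w)) = ((r,s) \<in> insert (p,q) (invs n w))"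
    proof (cases "(r,s) = (p,q)")
      case True then show ?thesis using pq wp wq by (auto simp: invs_def sgen_apply)
    next
      case False
      show ?thesis
      proof (cases "r < s")
        case True
        have ne: "w r \<noteq> w s" using inj True by (metis less_irrefl injD)
        have n1: "\<not>(w r = j \<and> w s = Suc j)"
          using False inj wp wq by (metis injD)
        have n2: "\<not>(w r = Suc j \<and> w s = j)"
          using True pq inj wp wq by (metis injD less_asym)
        have "sgen j (w s) < sgen j (w r) \<longleftrightarrow> w s < w r"
          using sgen_order[of "w s" "w r" j] ne n1 n2 by auto
        then show ?thesis using False by (auto simp: invs_def)
      next
        case False then show ?thesis using \<open>(r,s) \<noteq> (p,q)\<close> by (auto simp: invs_def)
      qed
    qed
  qed
qed

lemma ninv_sgen_left:
  assumes w: "w permutes {..<n}" and pq: "p < q" "q < n" and wp: "w p = j" and wq: "w q = Suc j"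
  shows "ninv n (sgen j \<circ> w) = Suc (ninv n w)"
  using invs_sgen_left[OF assms] finite_invs by (simp add: ninv_def)

lemma ninv_sgen_cases:
  assumes w: "w permutes {..<n}" and j: "Suc j < n"
  shows "ninv n (sgen j \<circ> w) = Suc (ninv n w) \<or> ninv n w = Suc (ninv n (sgen j \<circ> w))"
proof -
  let ?p = "inv w j" and ?q = "inv w (Suc j)"
  have p: "?p < n" "w ?p = j" using w j perm_inv_lt[OF w, of j]
    by (auto simp: permutes_inverses)
  have q: "?q < n" "w ?q = Suc j" using w j perm_inv_lt[OF w, of "Suc j"]
    by (auto simp: permutes_inverses)
  have "?p \<noteq> ?q" using p q by auto
  then consider "?p < ?q" | "?q < ?p" by linarith
  then show ?thesis
  proof cases
    case 1 then show ?thesis using ninv_sgen_left[OF w 1 q(1) p(2) q(2)] by simp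
  next
    case 2
    have w': "sgen j \<circ> w permutes {..<n}" by (rule permutes_compose[OF w sgen_perm[OF j]])
    have "ninv n (sgen j \<circ> (sgen j \<circ> w)) = Suc (ninv n (sgen j \<circ> w))"
      by (rule ninv_sgen_left[OF w' 2 p(1)]) (auto simp: q p sgen_apply)
    moreover have "sgen j \<circ> (sgen j \<circ> w) = w" by (simp add: o_assoc sgen_invol)
    ultimately show ?thesis by simp
  qed
qed


lemma ninv_swap_less:
  assumes w: "w permutes {..<n}" and pq: "p < q" "q < n" and wpq: "w p < w q"
  shows "ninv n w < ninv n (w \<circ> transpose p q)"
proof -
  let ?t = "transpose p q"
  let ?w' = "w \<circ> ?t"
  define h where "h = (\<lambda>(r::nat,s::nat). if (p < r \<and> r < q) \<or> (p < s \<and> s < q) then (r,s) else (?t r, ?t s))"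
  have inj: "inj w" using w by (rule permutes_inj)
  have img: "h ` invs n w \<subseteq> invs n ?w' - {(p,q)}"
  proof (rule image_subsetI)
    fix x assume x: "x \<in> invs n w"
    obtain r s where xrs: "x = (r,s)" by (cases x)
    have rs: "(r,s) \<in> invs n w" using x xrs by simp
    then have rs': "r < s" "s < n" "w s < w r" by (auto simp: invs_def)
    have "h (r,s) \<in> invs n ?w' - {(p,q)}"
    proof (cases "(p < r \<and> r < q) \<or> (p < s \<and> s < q)")
      case True
      then have "h (r,s) = (r,s)" by (simp add: h_def)
      moreover have "(r,s) \<in> invs n ?w'"
        using True rs' pq wpq by (auto simp: invs_def transpose_def)
      moreover have "(r,s) \<noteq> (p,q)" using True by auto
      ultimately show ?thesis by simp
    next
      case False
      then have "h (r,s) = (?t r, ?t s)" by (auto simp: h_def)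
      moreover have "(?t r, ?t s) \<in> invs n ?w'"
        using False rs' pq wpq by (auto simp: invs_def transpose_def)
      moreover have "(?t r, ?t s) \<noteq> (p,q)"
        using False rs' pq wpq by (auto simp: transpose_def)
      ultimately show ?thesis by simp
    qed
    then show "h x \<in> invs n ?w' - {(p,q)}" using xrs by simp
  qed
  have injh: "inj_on h (invs n w)"
  proof (rule inj_onI, clarify)
    fix r s r' s' assume "(r,s) \<in> invs n w" "(r',s') \<in> invs n w" and e: "h (r,s) = h (r',s')"
    then show "r = r' \<and> s = s'"
      using pq unfolding h_def by (auto simp: transpose_def split: if_splits)
  qed
  have "ninv n w = card (h ` invs n w)" using card_image[OF injh] by (simp add: ninv_def)
  also have "\<dots> \<le> card (invs n ?w' - {(p,q)})" by (rule card_mono[OF _ img]) (simp add: finite_invs)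
  also have "\<dots> < card (invs n ?w')"
  proof -
    have "(p,q) \<in> invs n ?w'" using pq wpq by (simp add: invs_def)
    then show ?thesis using finite_invs by (rule card_Diff1_less[rotated])
  qed
  finally show ?thesis by (simp add: ninv_def)
qed

lemma word_prod_Cons: "word_prod (x # xs) = x \<circ> word_prod xs" by (simp add: word_prod_def)
lemma word_prod_Nil: "word_prod [] = id" by (simp add: word_prod_def)

lemma gens_iff: "s \<in> gens n \<longleftrightarrow> (\<exists>j. s = sgen j \<and> Suc j < n)"
  by (auto simp: gens_def)

lemma word_perm: "set xs \<subseteq> gens n \<Longrightarrow> word_prod xs permutes {..<n}"
  by (induction xs) (auto simp: word_prod_Cons word_prod_Nil gens_iff permutes_id
       intro!: permutes_compose sgen_perm)

lemma word_ninv: "set xs \<subseteq> gens n \<Longrightarrow> ninv n (word_prod xs) \<le> length xs"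
proof (induction xs)
  case Nil
  have "invs n (word_prod []) = {}" unfolding invs_def by (auto simp: word_prod_Nil)
  then show ?case by (simp add: ninv_def)
next
  case (Cons x xs)
  then obtain j where x: "x = sgen j" "Suc j < n" by (auto simp: gens_iff)
  have p: "word_prod xs permutes {..<n}" using Cons by (intro word_perm) auto
  have e: "ninv n (word_prod (x#xs)) = ninv n (sgen j \<circ> word_prod xs)" by (simp add: word_prod_Cons x)
  have "ninv n (word_prod xs) \<le> length xs" using Cons by auto
  then show ?case using ninv_sgen_cases[OF p x(2)] e by auto
qed

lemma mono_unique:
  "(\<And>x y. a \<le> x \<Longrightarrow> x < y \<Longrightarrow> y < (b::nat) \<Longrightarrow> f x < (f y :: nat)) \<Longrightarrow>
    (\<And>x y. a \<le> x \<Longrightarrow> x < y \<Longrightarrow> y < b \<Longrightarrow> g x < (g y :: nat)) \<Longrightarrow>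
    f ` {a..<b} = g ` {a..<b} \<Longrightarrow> a \<le> x \<Longrightarrow> x < b \<Longrightarrow> f x = g x"
proof (induction b arbitrary: x)
  case 0 then show ?case by simp
next
  case (Suc b)
  show ?case
  proof (cases "a \<le> b")
    case False then show ?thesis using Suc by simp
  next
    case True
    have fmax: "f b = Max (f ` {a..<Suc b})"
    proof (rule sym, rule Max_eqI)
      fix y assume "y \<in> f ` {a..<Suc b}"
      then obtain z where "y = f z" "a \<le> z" "z \<le> b" by auto
      then show "y \<le> f b" using Suc.prems(1)[of z b] by (cases "z = b") auto
    qed (use True in auto)
    have gmax: "g b = Max (g ` {a..<Suc b})"
    proof (rule sym, rule Max_eqI)
      fix y assume "y \<in> g ` {a..<Suc b}"
      then obtain z where "y = g z" "a \<le> z" "z \<le> b" by auto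
      then show "y \<le> g b" using Suc.prems(2)[of z b] by (cases "z = b") auto
    qed (use True in auto)
    have fb: "f b = g b" using fmax gmax Suc.prems(3) by simp
    have "f ` {a..<b} = f ` {a..<Suc b} - {f b}"
      using Suc.prems(1) True by (fastforce simp: less_Suc_eq)
    moreover have "g ` {a..<b} = g ` {a..<Suc b} - {g b}"
      using Suc.prems(2) True by (fastforce simp: less_Suc_eq)
    ultimately have "f ` {a..<b} = g ` {a..<b}" using fb Suc.prems(3) by simp
    then show ?thesis
      using Suc.IH[of x] Suc.prems fb by (cases "x = b") auto
  qed
qed

lemma adj_mono:
  assumes "\<And>x. a \<le> x \<Longrightarrow> Suc x < b \<Longrightarrow> f x < (f (Suc x) :: nat)"
  shows "a \<le> x \<Longrightarrow> x < y \<Longrightarrow> y < b \<Longrightarrow> f x < f y"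
proof (induction y)
  case 0 then show ?case by simp
next
  case (Suc y)
  then show ?case using assms[of y] by (cases "x = y") auto
qed

lemma perm_mono_id:
  assumes w: "w permutes {..<n}" and m: "\<And>x. Suc x < n \<Longrightarrow> w x < w (Suc x)"
  shows "w = id"
proof
  fix x
  show "w x = id x"
  proof (cases "x < n")
    case True
    have "w x = id x"
      by (rule mono_unique[of 0 n w id]) (use adj_mono[of 0 n w] m True permutes_image[OF w] in \<open>auto simp: lessThan_atLeast0\<close>)
    then show ?thesis .
  next
    case False then show ?thesis using permutes_not_in[OF w] by simp
  qed
qed


lemma ninv_id: "ninv n id = 0"
proof -
  have "invs n id = {}" unfolding invs_def by auto
  then show ?thesis unfolding ninv_def by (simp only: card.empty)
qed

lemma ninv_sgen: "Suc j < n \<Longrightarrow> ninv n (sgen j) = 1"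
  using ninv_sgen_left[of id n j "Suc j" j] ninv_id by (simp add: permutes_id)

lemma image_perm_sub_eq:
  assumes v: "v permutes {..<(n::nat)}" and s: "v ` {..i} \<subseteq> {..i}"
  shows "v ` {..i} = {..i}"
proof -
  have "card (v ` {..i}) = card {..i}" using permutes_inj[OF v] by (simp add: card_image inj_on_subset)
  then show ?thesis using s by (metis card_subset_eq finite_atMost)
qed

lemma sgen_image_lowset: "j \<noteq> i \<Longrightarrow> sgen j ` {..i} = {..i}"
  unfolding sgen_def by (rule transpose_image_eq) auto

lemma word_exists:
  "v permutes {..<n} \<Longrightarrow> (\<forall>i\<in>I. v ` {..i} \<subseteq> {..i}) \<Longrightarrow>
   \<exists>xs. length xs = ninv n v \<and> set xs \<subseteq> {sgen j |j. Suc j < n \<and> j \<notin> I} \<and> word_prod xs = v"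
proof (induction "ninv n v" arbitrary: v rule: less_induct)
  case less
  note v = less.prems(1)
  show ?case
  proof (cases "v = id")
    case True
    then show ?thesis by (intro exI[of _ "[]"]) (simp add: ninv_id word_prod_Nil)
  next
    case False
    let ?w = "inv v"
    have w: "?w permutes {..<n}" by (rule permutes_inv[OF v])
    have "?w \<noteq> id"
    proof
      assume "?w = id"
      then have "inv ?w = id" by simp
      then show False using False permutes_inv_inv[OF v] by simp
    qed
    then obtain j where j: "Suc j < n" "\<not> ?w j < ?w (Suc j)"
      using perm_mono_id[OF w] by blast
    have "?w j \<noteq> ?w (Suc j)" using permutes_inj[OF w] by (metis injD n_not_Suc_n)
    then have wj: "?w (Suc j) < ?w j" using j by simp
    define v' where "v' = sgen j \<circ> v"
    have v': "v' permutes {..<n}" unfolding v'_def by (rule permutes_compose[OF v sgen_perm[OF j(1)]])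
    have "ninv n (sgen j \<circ> v') = Suc (ninv n v')"
      by (rule ninv_sgen_left[OF v' wj perm_inv_lt[OF v]])
         (use j in \<open>auto simp: v'_def permutes_inverses[OF v] sgen_apply\<close>)
    moreover have "sgen j \<circ> v' = v" by (simp add: v'_def o_assoc sgen_invol)
    ultimately have lt: "ninv n v' < ninv n v" by simp
    have jI: "j \<notin> I"
    proof
      assume "j \<in> I"
      then have sub: "v ` {..j} \<subseteq> {..j}" using less.prems(2) by auto
      have eq: "v ` {..j} = {..j}" by (rule image_perm_sub_eq[OF v sub])
      then obtain y where y: "y \<le> j" "v y = j" by (metis atMost_iff imageE order_refl)
      have "?w j = y" using y permutes_inv_eq[OF v] by simp
      moreover have "\<not> ?w (Suc j) \<le> j"
      proof
        assume "?w (Suc j) \<le> j"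
        then have "v (?w (Suc j)) \<in> {..j}" using eq by blast
        then show False by (simp add: permutes_inverses[OF v])
      qed
      ultimately show False using wj y by simp
    qed
    have inv': "\<forall>i\<in>I. v' ` {..i} \<subseteq> {..i}"
    proof
      fix i assume i: "i \<in> I"
      then have "j \<noteq> i" using jI by auto
      have "v' ` {..i} = sgen j ` (v ` {..i})" by (simp add: v'_def image_comp)
      also have "\<dots> \<subseteq> sgen j ` {..i}" using less.prems(2) i by (intro image_mono) auto
      also have "\<dots> = {..i}" by (rule sgen_image_lowset) fact
      finally show "v' ` {..i} \<subseteq> {..i}" .
    qed
    obtain xs where xs: "length xs = ninv n v'" "set xs \<subseteq> {sgen j |j. Suc j < n \<and> j \<notin> I}" "word_prod xs = v'"
      using less.hyps[OF lt v' inv'] by blast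
    show ?thesis
    proof (intro exI[of _ "sgen j # xs"] conjI)
      show "length (sgen j # xs) = ninv n v" using xs lt \<open>ninv n (sgen j \<circ> v') = Suc (ninv n v')\<close> \<open>sgen j \<circ> v' = v\<close> by simp
      show "set (sgen j # xs) \<subseteq> {sgen j |j. Suc j < n \<and> j \<notin> I}" using xs j jI by auto
      show "word_prod (sgen j # xs) = v" using xs \<open>sgen j \<circ> v' = v\<close> by (simp add: word_prod_Cons)
    qed
  qed
qed

lemma clen_eq: assumes w: "w permutes {..<n}" shows "clen n w = ninv n w"
  unfolding clen_def
proof (rule Least_equality)
  obtain xs where xs: "length xs = ninv n w" "set xs \<subseteq> {sgen j |j. Suc j < n \<and> j \<notin> {}}" "word_prod xs = w"
    using word_exists[OF w, of "{}"] by blast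
  have "set xs \<subseteq> gens n" using xs(2) by (auto simp: gens_def)
  then show "\<exists>xs. set xs \<subseteq> gens n \<and> length xs = ninv n w \<and> word_prod xs = w" using xs by blast
next
  fix m assume "\<exists>xs. set xs \<subseteq> gens n \<and> length xs = m \<and> word_prod xs = w"
  then obtain xs where "set xs \<subseteq> gens n" "length xs = m" "word_prod xs = w" by blast
  then show "ninv n w \<le> m" using word_ninv by blast
qed

lemma clen_right:
  assumes w: "w permutes {..<n}" and j: "Suc j < n"
  shows "clen n w < clen n (w \<circ> sgen j) \<longleftrightarrow> w j < w (Suc j)"
proof -
  have w': "w \<circ> sgen j permutes {..<n}" by (rule permutes_compose[OF sgen_perm[OF j] w])
  show ?thesis
  proof
    assume "w j < w (Suc j)"
    then have "ninv n w < ninv n (w \<circ> sgen j)"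
      using ninv_swap_less[OF w _ j] by (simp add: sgen_def)
    then show "clen n w < clen n (w \<circ> sgen j)"
      by (simp add: clen_eq[OF w] clen_eq[OF w'])
  next
    assume a: "clen n w < clen n (w \<circ> sgen j)"
    show "w j < w (Suc j)"
    proof (rule ccontr)
      assume "\<not> w j < w (Suc j)"
      moreover have "w j \<noteq> w (Suc j)" using permutes_inj[OF w] by (metis injD n_not_Suc_n)
      ultimately have "(w \<circ> sgen j) j < (w \<circ> sgen j) (Suc j)" by (simp add: sgen_apply)
      then have "ninv n (w \<circ> sgen j) < ninv n (w \<circ> sgen j \<circ> transpose j (Suc j))"
        using ninv_swap_less[OF w' _ j] by simp
      moreover have "w \<circ> sgen j \<circ> transpose j (Suc j) = w" by (simp add: o_assoc[symmetric] sgen_def)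
      ultimately show False using a by (simp add: clen_eq[OF w] clen_eq[OF w'])
    qed
  qed
qed

lemma conj_transpose:
  assumes b: "bij w" shows "w \<circ> transpose x y \<circ> inv w = transpose (w x) (w y)"
proof -
  have "transpose (w x) (w y) \<circ> w = w \<circ> transpose x y"
    using transpose_comp_eq[OF b, of "w x" "w y"] by (simp add: bij_is_inj[OF b])
  then have "transpose (w x) (w y) \<circ> w \<circ> inv w = w \<circ> transpose x y \<circ> inv w" by simp
  moreover have "w \<circ> inv w = id" using bij_is_surj[OF b] by (simp add: surj_iff)
  ultimately show ?thesis by (simp add: o_assoc[symmetric])
qed

lemma refls_char:
  assumes "t \<in> refls n" shows "\<exists>a b. a < b \<and> b < n \<and> t = transpose a b"
proof -
  obtain w j where w: "w permutes {..<n}" and j: "Suc j < n" and t: "t = w \<circ> sgen j \<circ> inv w"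
    using assms by (auto simp: refls_def Sn_def gens_def)
  have t': "t = transpose (w j) (w (Suc j))"
    using conj_transpose[OF permutes_bij[OF w]] t by (simp add: sgen_def)
  have ne: "w j \<noteq> w (Suc j)" using permutes_inj[OF w] by (metis injD n_not_Suc_n)
  have lt: "w j < n" "w (Suc j) < n" using j perm_lt[OF w] by auto
  show ?thesis
  proof (cases "w j < w (Suc j)")
    case True then show ?thesis using t' lt by blast
  next
    case False
    then have "w (Suc j) < w j" using ne by simp
    then show ?thesis using t' lt transpose_commute by metis
  qed
qed

lemma transp_in_refls:
  assumes ab: "a < b" "b < n" shows "transpose a b \<in> refls n"
proof -
  define w where "w = transpose (Suc a) b"
  have w: "w permutes {..<n}" unfolding w_def using ab by (intro permutes_swap_id) auto
  have "w \<circ> sgen a \<circ> inv w = transpose (w a) (w (Suc a))"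
    using conj_transpose[OF permutes_bij[OF w]] by (simp add: sgen_def)
  also have "\<dots> = transpose a b" using ab by (simp add: w_def)
  finally have "transpose a b = w \<circ> sgen a \<circ> inv w" ..
  moreover have "sgen a \<in> gens n" using ab by (auto simp: gens_def)
  ultimately show ?thesis using w unfolding refls_def Sn_def by blast
qed

lemma sgen_Tk: "Suc j < n \<Longrightarrow> sgen j \<in> Tk n k"
  unfolding Tk_def using transp_in_refls[of j "Suc j" n] ninv_sgen[of j n]
    clen_eq[OF sgen_perm[of j n]] by (simp add: sgen_def)


definition tabr :: "nat \<Rightarrow> (nat \<Rightarrow> nat) \<Rightarrow> nat \<Rightarrow> nat \<Rightarrow> nat" where
  "tabr n w i c = card {r. r \<le> i \<and> r < n \<and> c \<le> w r}"

definition tab_le :: "nat \<Rightarrow> (nat \<Rightarrow> nat) \<Rightarrow> (nat \<Rightarrow> nat) \<Rightarrow> bool" where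
  "tab_le n u v \<longleftrightarrow> (\<forall>i c. tabr n u i c \<le> tabr n v i c)"

lemma finite_tabset: "finite {r::nat. r \<le> i \<and> r < n \<and> P r}"
  by (rule finite_subset[of _ "{..<n}"]) auto

lemma tab_swap:
  assumes x: "x permutes {..<n}" and pq: "p < q" "q < n" and xpq: "x p < x q"
  shows "tabr n (x \<circ> transpose p q) i c =
     tabr n x i c + (if p \<le> i \<and> i < q \<and> x p < c \<and> c \<le> x q then 1 else 0)"
proof -
  let ?t = "transpose p q"
  define S where "S = {r. r \<le> i \<and> r < n \<and> c \<le> x r}"
  define S' where "S' = {r. r \<le> i \<and> r < n \<and> c \<le> x (?t r)}"
  have fS: "finite S" unfolding S_def by (rule finite_tabset)
  have tS: "tabr n x i c = card S" "tabr n (x \<circ> ?t) i c = card S'"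
    by (simp_all add: tabr_def S_def S'_def)
  consider "i < p" | "q \<le> i" | "p \<le> i" "i < q" by linarith
  then show ?thesis
  proof cases
    case 1
    then have "S' = S" unfolding S_def S'_def using pq by (auto simp: transpose_def)
    then show ?thesis using tS 1 by simp
  next
    case 2
    have "S' = ?t ` S"
    proof (rule set_eqI)
      fix r
      have "r \<in> ?t ` S \<longleftrightarrow> ?t r \<in> S" by (rule in_transpose_image_iff)
      then show "r \<in> S' \<longleftrightarrow> r \<in> ?t ` S"
        unfolding S_def S'_def using 2 pq by (auto simp: transpose_def)
    qed
    then have "card S' = card S" by (simp add: card_image)
    then show ?thesis using tS 2 by simp
  next
    case 3
    have Sp: "p \<in> S \<longleftrightarrow> c \<le> x p" unfolding S_def using 3 pq by auto
    have S'eq: "S' = (S - {p}) \<union> (if c \<le> x q then {p} else {})"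
      unfolding S_def S'_def using 3 pq by (auto simp: transpose_def)
    consider "c \<le> x p" | "x p < c" "c \<le> x q" | "x q < c" by linarith
    then show ?thesis
    proof cases
      case 1
      then have "S' = S" using S'eq Sp xpq by auto
      then show ?thesis using tS 1 by simp
    next
      case 2
      then have "S' = insert p S" "p \<notin> S" using S'eq Sp by auto
      then show ?thesis using tS 2 3 fS by simp
    next
      case c3: 3
      then have "S' = S" using S'eq Sp xpq by auto
      then show ?thesis using tS c3 by simp
    qed
  qed
qed

lemma transp_perm: "a < n \<Longrightarrow> b < n \<Longrightarrow> transpose a b permutes {..<(n::nat)}"
  by (rule permutes_swap_id) auto

lemma bruhat_step_tab:
  assumes x: "x permutes {..<n}" and t: "t \<in> refls n" and l: "clen n x < clen n (t \<circ> x)"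
  shows "tabr n x i c \<le> tabr n (t \<circ> x) i c"
proof -
  obtain a b where ab: "a < b" "b < n" "t = transpose a b" using refls_char[OF t] by blast
  let ?p = "inv x a" and ?q = "inv x b"
  have pq: "?p < n" "?q < n" "x ?p = a" "x ?q = b"
    using ab perm_inv_lt[OF x] permutes_inverses[OF x] by auto
  have teq: "t \<circ> x = x \<circ> transpose ?p ?q"
    using transpose_comp_eq[OF permutes_bij[OF x]] ab by simp
  have "t permutes {..<n}" using ab transp_perm[of a n b] by simp
  then have tx: "t \<circ> x permutes {..<n}" using permutes_compose[OF x] by simp
  have lt: "ninv n x < ninv n (t \<circ> x)" using l clen_eq[OF x] clen_eq[OF tx] by simp
  have "?p \<noteq> ?q" using pq ab by auto
  moreover have "\<not> ?q < ?p"
  proof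
    assume qp: "?q < ?p"
    let ?y = "x \<circ> transpose ?p ?q"
    have y: "?y permutes {..<n}" using tx teq by simp
    have "?y ?q < ?y ?p" using pq ab by simp
    then have "ninv n ?y < ninv n (?y \<circ> transpose ?q ?p)"
      by (rule ninv_swap_less[OF y qp pq(1)])
    moreover have "?y \<circ> transpose ?q ?p = x"
      by (simp add: o_assoc[symmetric] transpose_commute[of "inv x b"])
    ultimately show False using lt teq by simp
  qed
  ultimately have "?p < ?q" by simp
  then show ?thesis using tab_swap[OF x \<open>?p < ?q\<close> pq(2)] pq ab teq by simp
qed

lemma bruhat_rel_perm:
  "(\<lambda>x y. \<exists>t\<in>refls n. y = t \<circ> x \<and> clen n x < clen n y)\<^sup>*\<^sup>* u v \<Longrightarrow> u permutes {..<n} \<Longrightarrow>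
   v permutes {..<n} \<and> tab_le n u v"
proof (induction rule: rtranclp_induct)
  case base then show ?case by (simp add: tab_le_def)
next
  case (step y z)
  then obtain t where t: "t \<in> refls n" "z = t \<circ> y" "clen n y < clen n z" by blast
  have y: "y permutes {..<n}" using step by blast
  obtain a b where ab: "a < b" "b < n" "t = transpose a b" using refls_char[OF t(1)] by blast
  have "t permutes {..<n}" using ab transp_perm[of a n b] by simp
  then have z: "z permutes {..<n}" using t permutes_compose[OF y] by simp
  have "tab_le n y z" unfolding tab_le_def using bruhat_step_tab[OF y t(1)] t by simp
  then show ?case using z step unfolding tab_le_def by (meson order_trans)
qed

lemma bruhat_tab: "bruhat_le n u v \<Longrightarrow> tab_le n u v"
  unfolding bruhat_le_def using bruhat_rel_perm by (auto simp: Sn_def)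


definition Mt :: "nat \<Rightarrow> (nat \<Rightarrow> nat) \<Rightarrow> nat" where
  "Mt n w = (\<Sum>i<n. \<Sum>c\<le>n. tabr n w i c)"

lemma bruhat_refl: "u permutes {..<n} \<Longrightarrow> bruhat_le n u u"
  by (simp add: bruhat_le_def Sn_def)

lemma tab_key:
  assumes u: "u permutes {..<n}" and v: "v permutes {..<n}" and tab: "tab_le n u v"
    and p: "p < n" and pre: "\<And>r. r < p \<Longrightarrow> u r = v r"
    and a: "u p < c" and cb: "c \<le> v p" and i: "p \<le> i"
    and gap: "\<And>r. p < r \<Longrightarrow> r \<le> i \<Longrightarrow> r < n \<Longrightarrow> \<not> (u p < u r \<and> u r \<le> v p)"
  shows "tabr n u i c < tabr n v i c"
proof -
  define Su where "Su = (\<lambda>d. {r. r \<le> i \<and> r < n \<and> d \<le> u r})"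
  define Sv where "Sv = (\<lambda>d. {r. r \<le> i \<and> r < n \<and> d \<le> v r})"
  define M where "M = {r. r < p \<and> c \<le> u r \<and> u r \<le> v p}"
  have fin: "finite (Su d)" "finite (Sv d)" for d unfolding Su_def Sv_def by (rule finite_tabset)+
  have fM: "finite M" unfolding M_def by auto
  have s1: "Su c \<subseteq> Su (Suc (v p)) \<union> M"
  proof
    fix r assume r: "r \<in> Su c"
    then have r': "r \<le> i" "r < n" "c \<le> u r" by (auto simp: Su_def)
    show "r \<in> Su (Suc (v p)) \<union> M"
    proof (cases "r < p")
      case True then show ?thesis using r' p i by (auto simp: M_def Su_def)
    next
      case False
      then have "r \<noteq> p" using r' a by auto
      then have "p < r" using False by simp
      then have "\<not> (u p < u r \<and> u r \<le> v p)" using gap r' by blast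
      then have "v p < u r" using r' a by auto
      then show ?thesis using r' by (auto simp: Su_def)
    qed
  qed
  have s2: "Sv (Suc (v p)) \<union> M \<union> {p} \<subseteq> Sv c"
    using i p pre cb unfolding Sv_def M_def by auto
  have d1: "Sv (Suc (v p)) \<inter> M = {}" using pre unfolding Sv_def M_def by force
  have d2: "p \<notin> Sv (Suc (v p)) \<union> M" unfolding Sv_def M_def by auto
  have "tabr n u i c = card (Su c)" by (simp add: tabr_def Su_def)
  also have "\<dots> \<le> card (Su (Suc (v p)) \<union> M)" by (rule card_mono) (use s1 fin fM in auto)
  also have "\<dots> \<le> card (Su (Suc (v p))) + card M" by (rule card_Un_le)
  also have "card (Su (Suc (v p))) \<le> card (Sv (Suc (v p)))"
    using tab unfolding tab_le_def tabr_def Su_def Sv_def by blast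
  also have "card (Sv (Suc (v p))) + card M < card (Sv (Suc (v p)) \<union> M \<union> {p})"
    using d1 d2 fin fM by (simp add: card_Un_disjoint)
  also have "\<dots> \<le> card (Sv c)" by (rule card_mono[OF fin(2) s2])
  also have "\<dots> = tabr n v i c" by (simp add: tabr_def Sv_def)
  finally show ?thesis by simp
qed

lemma tab_bruhat:
  "u permutes {..<n} \<Longrightarrow> v permutes {..<n} \<Longrightarrow> tab_le n u v \<Longrightarrow> bruhat_le n u v"
proof (induction "Mt n v - Mt n u" arbitrary: u rule: less_induct)
  case less
  note u = less.prems(1) and v = less.prems(2) and tab = less.prems(3)
  show ?case
  proof (cases "u = v")
    case True then show ?thesis using bruhat_refl[OF u] by simp
  next
    case False
    have "\<exists>r. r < n \<and> u r \<noteq> v r"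
    proof (rule ccontr)
      assume "\<not> ?thesis"
      then have "u x = v x" for x using permutes_not_in[OF u] permutes_not_in[OF v] by (cases "x < n") auto
      then show False using False by auto
    qed
    define p where "p = (LEAST r. r < n \<and> u r \<noteq> v r)"
    have p: "p < n" "u p \<noteq> v p" unfolding p_def using LeastI_ex[OF \<open>\<exists>r. r < n \<and> u r \<noteq> v r\<close>] by auto
    have pre: "u r = v r" if "r < p" for r
      using not_less_Least[OF that[unfolded p_def]] that p(1) unfolding p_def by auto
    have uv: "u p < v p"
    proof (rule ccontr)
      assume "\<not> u p < v p"
      then have vu: "v p < u p" using p by simp
      define Su where "Su = {r. r \<le> p \<and> r < n \<and> u p \<le> u r}"
      define Sv where "Sv = {r. r \<le> p \<and> r < n \<and> u p \<le> v r}"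
      have "Sv \<subseteq> Su - {p}" using pre vu unfolding Su_def Sv_def by (auto simp: le_less)
      moreover have "p \<in> Su" using p unfolding Su_def by auto
      ultimately have "card Sv < card Su"
        using finite_tabset[of p n "\<lambda>r. u p \<le> u r"] unfolding Su_def
        by (metis (no_types, lifting) card_Diff1_less card_mono finite_Diff le_less_trans)
      moreover have "card Su \<le> card Sv" using tab unfolding tab_le_def tabr_def Su_def Sv_def by blast
      ultimately show False by simp
    qed
    define r0 where "r0 = inv u (v p)"
    have r0: "r0 < n" "u r0 = v p" unfolding r0_def
      using perm_inv_lt[OF u perm_lt[OF v p(1)]] permutes_inverses[OF u] by auto
    have "p < r0"
    proof -
      have "r0 \<noteq> p" using r0 p by auto
      moreover have "\<not> r0 < p"
      proof
        assume "r0 < p"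
        then have "v r0 = v p" using pre r0 by simp
        then show False using \<open>r0 < p\<close> permutes_inj[OF v] by (metis injD less_irrefl)
      qed
      ultimately show ?thesis by simp
    qed
    have exq: "\<exists>r. p < r \<and> r < n \<and> u p < u r \<and> u r \<le> v p" using r0 \<open>p < r0\<close> uv by auto
    define q where "q = (LEAST r. p < r \<and> r < n \<and> u p < u r \<and> u r \<le> v p)"
    have q: "p < q" "q < n" "u p < u q" "u q \<le> v p"
      using LeastI_ex[OF exq] unfolding q_def by auto
    have gapq: "\<not> (u p < u r \<and> u r \<le> v p)" if "p < r" "r < q" for r
      using not_less_Least[OF that(2)[unfolded q_def]] that q(2) unfolding q_def by auto
    define u' where "u' = u \<circ> transpose p q"
    have u': "u' permutes {..<n}" unfolding u'_def by (rule permutes_compose[OF transp_perm[OF _ q(2)] u]) (use p in auto)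
    have tsw: "tabr n u' i c = tabr n u i c + (if p \<le> i \<and> i < q \<and> u p < c \<and> c \<le> u q then 1 else 0)" for i c
      unfolding u'_def by (rule tab_swap[OF u q(1) q(2) q(3)])
    have tab': "tab_le n u' v" unfolding tab_le_def
    proof (intro allI)
      fix i c
      show "tabr n u' i c \<le> tabr n v i c"
      proof (cases "p \<le> i \<and> i < q \<and> u p < c \<and> c \<le> u q")
        case True
        have "tabr n u i c < tabr n v i c"
          by (rule tab_key[OF u v tab p(1) pre]) (use True q gapq in auto)
        then show ?thesis using tsw[of i c] True by simp
      next
        case False
        then have "tabr n u' i c = tabr n u i c" using tsw[of i c] by (simp only: if_False)
        then show ?thesis using tab by (simp add: tab_le_def)
      qed
    qed
    have le1: "tabr n u i c \<le> tabr n u' i c" for i c using tsw[of i c] by simp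
    have "Mt n u < Mt n u'" unfolding Mt_def
    proof (rule sum_strict_mono_ex1)
      show "\<forall>i\<in>{..<n}. (\<Sum>c\<le>n. tabr n u i c) \<le> (\<Sum>c\<le>n. tabr n u' i c)"
        using le1 by (auto intro: sum_mono)
      have "(\<Sum>c\<le>n. tabr n u p c) < (\<Sum>c\<le>n. tabr n u' p c)"
      proof (rule sum_strict_mono_ex1)
        show "\<forall>c\<in>{..n}. tabr n u p c \<le> tabr n u' p c" using le1 by auto
        have "u q < n" using perm_lt[OF u q(2)] .
        then show "\<exists>c\<in>{..n}. tabr n u p c < tabr n u' p c"
          using tsw[of p "u q"] q by (intro bexI[of _ "u q"]) auto
      qed simp
      then show "\<exists>i\<in>{..<n}. (\<Sum>c\<le>n. tabr n u i c) < (\<Sum>c\<le>n. tabr n u' i c)"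
        using p by blast
    qed simp
    moreover have "Mt n u' \<le> Mt n v" unfolding Mt_def using tab' unfolding tab_le_def
      by (intro sum_mono) auto
    ultimately have "Mt n v - Mt n u' < Mt n v - Mt n u" by simp
    then have IH: "bruhat_le n u' v" using less.hyps u' v tab' by blast
    have ab: "u p < u q" "u q < n" using q perm_lt[OF u q(2)] by auto
    have teq: "transpose (u p) (u q) \<circ> u = u'"
      using transpose_comp_eq[OF permutes_bij[OF u], of "u p" "u q"] permutes_inverses[OF u]
      by (simp add: u'_def)
    have "ninv n u < ninv n u'" unfolding u'_def by (rule ninv_swap_less[OF u q(1) q(2) q(3)])
    then have cl: "clen n u < clen n u'" using clen_eq[OF u] clen_eq[OF u'] by simp
    have tr: "transpose (u p) (u q) \<in> refls n" by (rule transp_in_refls[OF ab])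
    have step: "(\<lambda>x y. \<exists>t\<in>refls n. y = t \<circ> x \<and> clen n x < clen n y) u u'"
      using tr teq cl by metis
    show ?thesis using IH step u unfolding bruhat_le_def Sn_def
      by (auto intro: converse_rtranclp_into_rtranclp)
  qed
qed

lemma bruhat_iff_tab:
  "u permutes {..<n} \<Longrightarrow> v permutes {..<n} \<Longrightarrow> bruhat_le n u v \<longleftrightarrow> tab_le n u v"
  using bruhat_tab tab_bruhat by blast


definition blockinc :: "nat \<Rightarrow> nat \<Rightarrow> (nat \<Rightarrow> nat) \<Rightarrow> bool" where
  "blockinc n i g \<longleftrightarrow> (\<forall>j. Suc j < n \<and> j \<noteq> i \<longrightarrow> g j < g (Suc j))"

lemma blockinc_mono1: "blockinc n i g \<Longrightarrow> i < n \<Longrightarrow> x < y \<Longrightarrow> y \<le> i \<Longrightarrow> g x < g y"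
  using adj_mono[of 0 "Suc i" g x y] unfolding blockinc_def by auto

lemma blockinc_mono2: "blockinc n i g \<Longrightarrow> i < x \<Longrightarrow> x < y \<Longrightarrow> y < n \<Longrightarrow> g x < g y"
  using adj_mono[of "Suc i" n g x y] unfolding blockinc_def by auto

lemma grass_unique:
  assumes g: "g permutes {..<n}" and g': "g' permutes {..<n}" and b: "blockinc n i g" and b': "blockinc n i g'"
    and i: "i < n" and A: "g ` {..i} = g' ` {..i}"
  shows "g = g'"
proof
  fix x
  have low: "g x = g' x" if "x \<le> i"
    by (rule mono_unique[of 0 "Suc i" g g']) (use blockinc_mono1[OF b i] blockinc_mono1[OF b' i] A that in \<open>auto simp: atLeast0LessThan lessThan_Suc_atMost\<close>)
  have eq2: "{Suc i..<n} = {..<n} - {..i}" by auto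
  have "g ` {Suc i..<n} = g' ` {Suc i..<n}"
    unfolding eq2 image_set_diff[OF permutes_inj[OF g]] image_set_diff[OF permutes_inj[OF g']]
      permutes_image[OF g] permutes_image[OF g'] A ..
  then have high: "g x = g' x" if "i < x" "x < n"
    by (intro mono_unique[of "Suc i" n g g']) (use blockinc_mono2[OF b] blockinc_mono2[OF b'] that in auto)
  show "g x = g' x"
  proof (cases "x < n")
    case True then show ?thesis using low high by (cases "x \<le> i") auto
  next
    case False then show ?thesis using permutes_not_in[OF g] permutes_not_in[OF g'] by simp
  qed
qed

lemma grass_exists:
  assumes A: "A \<subseteq> {..<n}" and cA: "card A = Suc i" and i: "i < n"
  shows "\<exists>g. g permutes {..<n} \<and> blockinc n i g \<and> g ` {..i} = A"
proof -
  define L1 where "L1 = sorted_list_of_set A"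
  define L2 where "L2 = sorted_list_of_set ({..<n} - A)"
  define L where "L = L1 @ L2"
  have fA: "finite A" using A finite_subset by blast
  have L1: "set L1 = A" "length L1 = Suc i" "sorted_wrt (<) L1" "distinct L1"
    using fA cA by (simp_all add: L1_def)
  have L2: "set L2 = {..<n} - A" "sorted_wrt (<) L2" "distinct L2"
    by (simp_all add: L2_def)
  have setL: "set L = {..<n}" using L1 L2 A by (auto simp: L_def)
  have dL: "distinct L" using L1 L2 by (auto simp: L_def)
  have lenL: "length L = n" using distinct_card[OF dL] setL by simp
  have lenL2: "length L2 = n - Suc i" using lenL L1 by (simp add: L_def)
  define g where "g = (\<lambda>r. if r < n then L ! r else r)"
  have "bij_betw ((!) L) {..<n} {..<n}" using bij_betw_nth[OF dL] lenL setL by simp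
  then have "bij_betw g {..<n} {..<n}" by (rule bij_betw_cong[THEN iffD1, rotated]) (simp add: g_def)
  then have gp: "g permutes {..<n}" by (rule bij_imp_permutes) (simp add: g_def)
  have gl: "g r = L1 ! r" if "r \<le> i" for r using that i L1 by (simp add: g_def L_def nth_append)
  have gh: "g r = L2 ! (r - Suc i)" if "i < r" "r < n" for r
    using that L1 by (simp add: g_def L_def nth_append)
  have "g ` {..i} = (!) L1 ` {0..<Suc i}" using gl by (auto simp: atLeast0LessThan lessThan_Suc_atMost)
  also have "\<dots> = A" using nth_image[of "Suc i" L1] L1 by simp
  finally have img: "g ` {..i} = A" .
  have bi: "blockinc n i g" unfolding blockinc_def
  proof (intro allI impI)
    fix j assume j: "Suc j < n \<and> j \<noteq> i"
    show "g j < g (Suc j)"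
    proof (cases "j < i")
      case True then show ?thesis using gl[of j] gl[of "Suc j"] sorted_wrt_nth_less[OF L1(3), of j "Suc j"] L1 by simp
    next
      case False
      then have "i < j" using j by simp
      then show ?thesis using gh[of j] gh[of "Suc j"] j lenL2
          sorted_wrt_nth_less[OF L2(2), of "j - Suc i" "Suc j - Suc i"] by simp
    qed
  qed
  show ?thesis using gp bi img by blast
qed


lemma sgen_inj: "sgen j = sgen i \<Longrightarrow> j = i"
proof -
  assume "sgen j = sgen i"
  then have "sgen j j = sgen i j" by simp
  then show "j = i" by (auto simp: sgen_apply split: if_splits)
qed

lemma J_iff: "s \<in> gens n - {sgen i} \<longleftrightarrow> (\<exists>j. s = sgen j \<and> Suc j < n \<and> j \<noteq> i)"
  unfolding gens_def by (auto dest: sgen_inj)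

lemma WupJ_iff:
  "w \<in> WupJ n (gens n - {sgen i}) \<longleftrightarrow> w permutes {..<n} \<and> blockinc n i w"
proof
  assume w: "w \<in> WupJ n (gens n - {sgen i})"
  then have wp: "w permutes {..<n}" by (simp add: WupJ_def Sn_def)
  have "w j < w (Suc j)" if "Suc j < n" "j \<noteq> i" for j
  proof -
    have "sgen j \<in> gens n - {sgen i}" using that J_iff by blast
    then have "clen n w < clen n (w \<circ> sgen j)" using w by (simp add: WupJ_def)
    then show ?thesis using clen_right[OF wp that(1)] by simp
  qed
  then show "w permutes {..<n} \<and> blockinc n i w" using wp by (simp add: blockinc_def)
next
  assume a: "w permutes {..<n} \<and> blockinc n i w"
  show "w \<in> WupJ n (gens n - {sgen i})"
    unfolding WupJ_def Sn_def
  proof (intro CollectI conjI ballI)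
    show "w permutes {..<n}" using a by simp
    fix s assume "s \<in> gens n - {sgen i}"
    then obtain j where j: "s = sgen j" "Suc j < n" "j \<noteq> i" using J_iff by blast
    then show "clen n w < clen n (w \<circ> s)" using clen_right[of w n j] a by (simp add: blockinc_def)
  qed
qed

lemma WJ_imp:
  assumes "v \<in> WJ n (gens n - {sgen i})"
  shows "v permutes {..<n} \<and> v ` {..i} = {..i}"
proof -
  obtain xs where xs: "v = word_prod xs" "set xs \<subseteq> gens n - {sgen i}" using assms by (auto simp: WJ_def)
  have "word_prod xs ` {..i} = {..i}" using xs(2)
  proof (induction xs)
    case Nil then show ?case by (simp add: word_prod_Nil)
  next
    case (Cons x xs)
    have "x \<in> gens n - {sgen i}" using Cons.prems by simp
    then obtain j where "x = sgen j" "j \<noteq> i" using J_iff[THEN iffD1] by blast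
    then have "word_prod (x # xs) ` {..i} = sgen j ` (word_prod xs ` {..i})"
      by (simp add: word_prod_Cons image_comp)
    then show ?case using Cons \<open>j \<noteq> i\<close> by (simp add: sgen_image_lowset)
  qed
  moreover have "word_prod xs permutes {..<n}" using xs(2) by (intro word_perm) auto
  ultimately show ?thesis using xs by simp
qed

lemma WJ_intro:
  assumes v: "v permutes {..<n}" and s: "v ` {..i} \<subseteq> {..i}"
  shows "v \<in> WJ n (gens n - {sgen i})"
proof -
  obtain xs where xs: "set xs \<subseteq> {sgen j |j. Suc j < n \<and> j \<notin> {i}}" "word_prod xs = v"
    using word_exists[OF v, of "{i}"] s by auto
  have "set xs \<subseteq> gens n - {sgen i}"
  proof
    fix x assume "x \<in> set xs"
    then have "\<exists>j. x = sgen j \<and> Suc j < n \<and> j \<noteq> i" using xs(1) by auto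
    then show "x \<in> gens n - {sgen i}" by (rule J_iff[THEN iffD2])
  qed
  then show ?thesis using xs(2) by (auto simp: WJ_def)
qed

lemma ninv_add:
  assumes g: "g permutes {..<n}" and b: "blockinc n i g" and v: "v permutes {..<n}"
    and vi: "v ` {..i} = {..i}" and i: "i < n"
  shows "ninv n (g \<circ> v) = ninv n g + ninv n v"
proof -
  have pres: "v x \<le> i \<longleftrightarrow> x \<le> i" for x
  proof
    assume "v x \<le> i"
    then have "v x \<in> v ` {..i}" using vi by simp
    then obtain y where "y \<le> i" "v x = v y" by auto
    then show "x \<le> i" using permutes_inj[OF v] by (metis injD)
  next
    assume "x \<le> i" then show "v x \<le> i" using vi by auto
  qed
  have gm: "g x < g y" if "x < y" "y < n" "y \<le> i \<or> i < x" for x y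
    using blockinc_mono1[OF b i] blockinc_mono2[OF b] that by auto
  let ?X = "invs n (g \<circ> v)"
  define same where "same = {(r,s). (r,s) \<in> ?X \<and> (s \<le> i \<or> i < r)}"
  define cross where "cross = {(r,s). (r,s) \<in> ?X \<and> r \<le> i \<and> i < s}"
  have Xeq: "?X = same \<union> cross" unfolding same_def cross_def by (auto simp: invs_def)
  have disj: "same \<inter> cross = {}" unfolding same_def cross_def by auto
  have fin: "finite same" "finite cross"
    using finite_invs[of n "g \<circ> v"] unfolding same_def cross_def by (auto intro: finite_subset)
  have vlt: "v x < n" if "x < n" for x using perm_lt[OF v that] .
  have same_eq: "same = invs n v"
  proof (rule set_eqI, clarify)
    fix r s
    show "(r,s) \<in> same \<longleftrightarrow> (r,s) \<in> invs n v"
    proof (cases "r < s \<and> s < n")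
      case True
      have ne: "v r \<noteq> v s" using True permutes_inj[OF v] by (metis injD less_irrefl)
      show ?thesis
      proof (cases "s \<le> i \<or> i < r")
        case sb: True
        then have sb': "v s \<le> i \<and> v r \<le> i \<or> i < v r \<and> i < v s" using True pres[of s] pres[of r] by auto
        have "g (v s) < g (v r) \<longleftrightarrow> v s < v r"
        proof
          assume "g (v s) < g (v r)"
          show "v s < v r"
          proof (rule ccontr)
            assume "\<not> v s < v r"
            then have "v r < v s" using ne by simp
            then have "g (v r) < g (v s)" using gm sb' vlt True by auto
            then show False using \<open>g (v s) < g (v r)\<close> by simp
          qed
        next
          assume "v s < v r" then show "g (v s) < g (v r)" using gm sb' vlt True by auto
        qed
        then show ?thesis using sb True by (auto simp: same_def invs_def)
      next
        case False
        then have "r \<le> i" "i < s" by auto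
        then have "v r \<le> i" "i < v s" using pres[of r] pres[of s] by auto
        then show ?thesis using False by (auto simp: same_def invs_def)
      qed
    next
      case False then show ?thesis by (auto simp: same_def invs_def)
    qed
  qed
  define h where "h = (\<lambda>(r,s). (v r, v s))"
  have injh: "inj_on h cross" unfolding h_def using permutes_inj[OF v]
    by (auto intro!: inj_onI dest: injD)
  have himg: "h ` cross = invs n g"
  proof
    show "h ` cross \<subseteq> invs n g"
    proof (rule image_subsetI)
      fix z assume z: "z \<in> cross"
      obtain r s where zrs: "z = (r,s)" by (cases z)
      have "(r,s) \<in> cross" using z zrs by simp
      then have rs: "r < s" "s < n" "g (v s) < g (v r)" "r \<le> i" "i < s" by (auto simp: cross_def invs_def)
      then have "v r \<le> i" "i < v s" using pres[of r] pres[of s] by auto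
      then show "h z \<in> invs n g" using rs vlt zrs by (auto simp: h_def invs_def)
    qed
  next
    show "invs n g \<subseteq> h ` cross"
    proof
      fix z assume z: "z \<in> invs n g"
      obtain x y where zxy: "z = (x,y)" by (cases z)
      have "(x,y) \<in> invs n g" using z zxy by simp
      then have xy: "x < y" "y < n" "g y < g x" by (auto simp: invs_def)
      have "\<not> (y \<le> i \<or> i < x)" using gm[OF xy(1,2)] xy(3) by auto
      then have xi: "x \<le> i" "i < y" by auto
      let ?r = "inv v x" and ?s = "inv v y"
      have rs: "v ?r = x" "v ?s = y" using permutes_inverses[OF v] by auto
      have "?r \<le> i" "i < ?s" using pres[of ?r] pres[of ?s] rs xi by auto
      moreover have "?s < n" using perm_inv_lt[OF v xy(2)] .
      ultimately have "(?r, ?s) \<in> cross" using rs xy by (auto simp: cross_def invs_def)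
      then show "z \<in> h ` cross" using rs zxy by (auto simp: h_def intro!: image_eqI[of _ _ "(?r,?s)"])
    qed
  qed
  have "ninv n (g \<circ> v) = card same + card cross"
    unfolding ninv_def Xeq by (rule card_Un_disjoint[OF fin disj])
  also have "card cross = ninv n g" unfolding ninv_def using card_image[OF injh] himg by simp
  also have "card same = ninv n v" unfolding ninv_def same_eq ..
  finally show ?thesis by (simp only: add.commute)
qed

lemma PJ_props:
  assumes w: "w permutes {..<n}" and i: "Suc i < n"
  shows "PJ n (gens n - {sgen i}) w permutes {..<n} \<and> blockinc n i (PJ n (gens n - {sgen i}) w)
     \<and> PJ n (gens n - {sgen i}) w ` {..i} = w ` {..i}"
proof -
  let ?J = "gens n - {sgen i}"
  define A where "A = w ` {..i}"
  have A: "A \<subseteq> {..<n}" unfolding A_def using perm_lt[OF w] i by auto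
  have cA: "card A = Suc i" unfolding A_def using permutes_inj[OF w]
    by (simp add: card_image inj_on_subset)
  obtain g where g: "g permutes {..<n}" "blockinc n i g" "g ` {..i} = A"
    using grass_exists[OF A cA] i by auto
  define v where "v = inv g \<circ> w"
  have vp: "v permutes {..<n}" unfolding v_def by (rule permutes_compose[OF w permutes_inv[OF g(1)]])
  have vs: "v ` {..i} \<subseteq> {..i}"
  proof clarify
    fix x assume "x \<le> i"
    then have "w x \<in> g ` {..i}" using g(3) A_def by auto
    then obtain y where "y \<le> i" "w x = g y" by auto
    then show "v x \<le> i" by (simp add: v_def permutes_inverses[OF g(1)])
  qed
  have vi: "v ` {..i} = {..i}" by (rule image_perm_sub_eq[OF vp vs])
  have wgv: "w = g \<circ> v" unfolding v_def by (simp add: o_assoc permutes_inv_o[OF g(1)])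
  let ?P = "\<lambda>u. u \<in> WupJ n ?J \<and> (\<exists>v\<in>WJ n ?J. w = u \<circ> v \<and> clen n w = clen n u + clen n v)"
  have Pg: "?P g"
  proof (intro conjI bexI)
    show "g \<in> WupJ n ?J" using g WupJ_iff by blast
    show "v \<in> WJ n ?J" by (rule WJ_intro[OF vp vs])
    show "w = g \<circ> v" by (rule wgv)
    show "clen n w = clen n g + clen n v"
      using clen_eq[OF w] clen_eq[OF g(1)] clen_eq[OF vp] ninv_add[OF g(1) g(2) vp vi] i wgv by simp
  qed
  have uniq: "u = g" if Pu: "?P u" for u
  proof -
    obtain v' where v': "v' \<in> WJ n ?J" "w = u \<circ> v'" using Pu by blast
    have u: "u permutes {..<n}" "blockinc n i u" using Pu WupJ_iff by blast+
    have "v' ` {..i} = {..i}" using WJ_imp[OF v'(1)] by simp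
    then have "u ` {..i} = w ` {..i}" using v'(2) by (metis image_comp)
    then show "u = g" using grass_unique[OF u(1) g(1) u(2) g(2)] i g(3) A_def by simp
  qed
  have "PJ n ?J w = g" unfolding PJ_def
    by (rule the1_equality) (use Pg uniq in blast)+
  then show ?thesis using g A_def by simp
qed


definition Gs :: "nat set \<Rightarrow> nat \<Rightarrow> nat" where
  "Gs A c = card {x\<in>A. c \<le> x}"

lemma bruhat_trans: "bruhat_le n u v \<Longrightarrow> bruhat_le n v w \<Longrightarrow> bruhat_le n u w"
  unfolding bruhat_le_def by (auto intro: rtranclp_trans)

lemma lchain_bruhat: "lchain n k u v \<Longrightarrow> u permutes {..<n} \<Longrightarrow> bruhat_le n u v"
proof (induction rule: lchain.induct)
  case (base u) then show ?case by (rule bruhat_refl)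
next
  case (step t u v)
  have b1: "bruhat_le n u (t \<circ> u)" using step by (simp add: bruhat_less_def)
  then have "t \<circ> u permutes {..<n}" by (simp add: bruhat_le_def Sn_def)
  then show ?case using b1 step bruhat_trans by blast
qed

lemma lek_bruhat: "lek n k u v \<Longrightarrow> bruhat_le n u v"
  unfolding lek_def using lchain_bruhat bruhat_refl by (auto simp: Sn_def)

lemma tabr_level:
  assumes w: "w permutes {..<n}" and i: "i < n"
  shows "tabr n w i c = Gs (w ` {..i}) c"
proof -
  have "{x\<in>w ` {..i}. c \<le> x} = w ` {r. r \<le> i \<and> r < n \<and> c \<le> w r}" using i by auto
  moreover have "inj_on w {r. r \<le> i \<and> r < n \<and> c \<le> w r}" using permutes_inj_on[OF w] .
  ultimately show ?thesis by (simp add: tabr_def Gs_def card_image)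
qed

lemma tabr_top:
  assumes w: "w permutes {..<n}" and i: "n \<le> Suc i"
  shows "tabr n w i c = card {x. x < n \<and> c \<le> x}"
proof -
  have "{x. x < n \<and> c \<le> x} = w ` {r. r \<le> i \<and> r < n \<and> c \<le> w r}"
  proof -
    have "{x. x < n \<and> c \<le> x} = w ` {r. r < n \<and> c \<le> w r}"
    proof (rule set_eqI)
      fix x
      show "x \<in> {x. x < n \<and> c \<le> x} \<longleftrightarrow> x \<in> w ` {r. r < n \<and> c \<le> w r}"
      proof
        assume "x \<in> {x. x < n \<and> c \<le> x}"
        then show "x \<in> w ` {r. r < n \<and> c \<le> w r}"
          using perm_inv_lt[OF w] permutes_inverses[OF w] by (auto intro!: image_eqI[of _ _ "inv w x"])
      qed (use perm_lt[OF w] in auto)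
    qed
    also have "{r. r < n \<and> c \<le> w r} = {r. r \<le> i \<and> r < n \<and> c \<le> w r}" using i by auto
    finally show ?thesis .
  qed
  moreover have "inj_on w {r. r \<le> i \<and> r < n \<and> c \<le> w r}" using permutes_inj_on[OF w] .
  ultimately show ?thesis by (simp add: tabr_def card_image)
qed

lemma Gs_sgen:
  assumes fA: "finite A" and j: "j \<in> A" and sj: "Suc j \<notin> A"
  shows "Gs (sgen j ` A) c = Gs A c + (if c = Suc j then 1 else 0)"
proof -
  have img: "sgen j ` A = insert (Suc j) (A - {j})"
  proof (rule set_eqI)
    fix x
    show "x \<in> sgen j ` A \<longleftrightarrow> x \<in> insert (Suc j) (A - {j})"
    proof
      assume "x \<in> sgen j ` A"
      then obtain y where "y \<in> A" "x = sgen j y" by auto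
      then show "x \<in> insert (Suc j) (A - {j})" using sj by (auto simp: sgen_apply split: if_splits)
    next
      assume x: "x \<in> insert (Suc j) (A - {j})"
      have "x = sgen j (sgen j x)" by (simp add: sgen_invol)
      moreover have "sgen j x \<in> A" using x j sj by (auto simp: sgen_apply)
      ultimately show "x \<in> sgen j ` A" by blast
    qed
  qed
  have f: "finite {x \<in> A. c \<le> x}" using fA by simp
  consider "c \<le> j" | "c = Suc j" | "Suc j < c" by linarith
  then show ?thesis
  proof cases
    case 1
    then have "{x \<in> sgen j ` A. c \<le> x} = insert (Suc j) ({x\<in>A. c \<le> x} - {j})" using img by auto
    moreover have "j \<in> {x\<in>A. c \<le> x}" "Suc j \<notin> {x\<in>A. c \<le> x} - {j}" using 1 j sj by auto
    moreover have "card {x\<in>A. c \<le> x} > 0" using 1 j f card_gt_0_iff by blast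
    ultimately show ?thesis using 1 f by (simp add: Gs_def)
  next
    case 2
    then have "{x \<in> sgen j ` A. c \<le> x} = insert (Suc j) {x\<in>A. c \<le> x}" using img by auto
    moreover have "Suc j \<notin> {x\<in>A. c \<le> x}" using sj by auto
    ultimately show ?thesis using 2 f by (simp add: Gs_def)
  next
    case 3
    then have "{x \<in> sgen j ` A. c \<le> x} = {x\<in>A. c \<le> x}" using img by auto
    then show ?thesis using 3 by (simp add: Gs_def)
  qed
qed


lemma grass_chain:
  "g permutes {..<n} \<Longrightarrow> g' permutes {..<n} \<Longrightarrow> blockinc n i g \<Longrightarrow> blockinc n i g' \<Longrightarrow> Suc i < n \<Longrightarrow>
   (\<forall>c. Gs (g ` {..i}) c \<le> Gs (g' ` {..i}) c) \<Longrightarrow>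
   lchain n k g g' \<and> (g = g' \<or> ninv n g < ninv n g')"
proof (induction "(\<Sum>c\<le>n. Gs (g' ` {..i}) c) - (\<Sum>c\<le>n. Gs (g ` {..i}) c)" arbitrary: g rule: less_induct)
  case less
  note g = less.prems(1) and g' = less.prems(2) and b = less.prems(3) and b' = less.prems(4)
    and i = less.prems(5) and G = less.prems(6)
  define A where "A = g ` {..i}"
  define A' where "A' = g' ` {..i}"
  show ?case
  proof (cases "g = g'")
    case True then show ?thesis by (simp add: lchain.base)
  next
    case False
    have AA': "A \<noteq> A'" using grass_unique[OF g g' b b'] i False unfolding A_def A'_def by auto
    have Asub: "A \<subseteq> {..<n}" "A' \<subseteq> {..<n}" unfolding A_def A'_def
      using perm_lt[OF g] perm_lt[OF g'] i by auto
    have fA: "finite A" "finite A'" using finite_subset[OF Asub(1)] finite_subset[OF Asub(2)] by auto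
    have cA: "card A = Suc i" "card A' = Suc i" unfolding A_def A'_def
      using permutes_inj[OF g] permutes_inj[OF g'] by (simp_all add: card_image inj_on_subset)
    define D where "D = (A - A') \<union> (A' - A)"
    have fD: "finite D" "D \<noteq> {}" using fA AA' unfolding D_def by auto
    define c1 where "c1 = Max D"
    have c1D: "c1 \<in> D" unfolding c1_def using fD by simp
    have above: "x \<in> A \<longleftrightarrow> x \<in> A'" if "c1 < x" for x
    proof (rule ccontr)
      assume "\<not> ?thesis"
      then have "x \<in> D" unfolding D_def by auto
      then have "x \<le> c1" unfolding c1_def using fD by simp
      then show False using that by simp
    qed
    have eqgt: "{x\<in>A. c1 < x} = {x\<in>A'. c1 < x}" using above by auto
    have fgt: "finite {x\<in>A. c1 < x}" using fA by simp
    have c1A: "c1 \<in> A' - A"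
    proof (rule ccontr)
      assume "c1 \<notin> A' - A"
      then have c1': "c1 \<in> A" "c1 \<notin> A'" using c1D unfolding D_def by auto
      have "{x\<in>A. c1 \<le> x} = insert c1 {x\<in>A. c1 < x}" using c1' by auto
      then have "Gs A c1 = Suc (card {x\<in>A. c1 < x})" using fgt by (simp add: Gs_def)
      moreover have "{x\<in>A'. c1 \<le> x} = {x\<in>A'. c1 < x}" using c1' by (auto simp: le_less)
      then have "Gs A' c1 = card {x\<in>A. c1 < x}" using eqgt by (simp add: Gs_def)
      moreover have "Gs A c1 \<le> Gs A' c1" using G unfolding A_def A'_def by blast
      ultimately show False by simp
    qed
    have "{x\<in>A. c1 \<le> x} = {x\<in>A. c1 < x}" using c1A by (auto simp: le_less)
    then have "Gs A c1 = card {x\<in>A. c1 < x}" by (simp add: Gs_def)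
    moreover have e2: "{x\<in>A'. c1 \<le> x} = insert c1 {x\<in>A'. c1 < x}" using c1A by (auto simp: le_less)
    have "c1 \<notin> {x\<in>A'. c1 < x}" by simp
    then have "card {x\<in>A'. c1 \<le> x} = Suc (card {x\<in>A'. c1 < x})" unfolding e2
      using fA(2) by simp
    then have "Gs A' c1 = Suc (card {x\<in>A. c1 < x})" using eqgt by (simp add: Gs_def)
    ultimately have lt1: "Gs A c1 < Gs A' c1" by simp
    then have ex: "\<exists>c. Gs A c < Gs A' c \<and> c \<notin> A" using c1A by blast
    define c0 where "c0 = (LEAST c. Gs A c < Gs A' c \<and> c \<notin> A)"
    have c0: "Gs A c0 < Gs A' c0" "c0 \<notin> A" using LeastI_ex[OF ex] unfolding c0_def by auto
    have c0le: "c0 \<le> c1" unfolding c0_def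
      by (rule Least_le) (use lt1 c1A in blast)
    have "c0 \<noteq> 0"
    proof
      assume "c0 = 0"
      then show False using c0(1) cA by (simp add: Gs_def)
    qed
    then obtain j where j: "c0 = Suc j" by (cases c0) auto
    have jA: "j \<in> A"
    proof (rule ccontr)
      assume jn: "j \<notin> A"
      have "{x\<in>A. j \<le> x} = {x\<in>A. c0 \<le> x}" using jn j by (auto simp: Suc_le_eq le_less)
      then have "Gs A j = Gs A c0" by (simp add: Gs_def)
      moreover have "Gs A' c0 \<le> Gs A' j" unfolding Gs_def using fA j by (intro card_mono) auto
      ultimately have "Gs A j < Gs A' j \<and> j \<notin> A" using c0 jn by simp
      then have "c0 \<le> j" unfolding c0_def by (rule Least_le)
      then show False using j by simp
    qed
    have sjA: "Suc j \<notin> A" using c0 j by simp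
    have jn: "Suc j < n" using c0le j c1A Asub by auto
    define g1 where "g1 = sgen j \<circ> g"
    have g1: "g1 permutes {..<n}" unfolding g1_def by (rule permutes_compose[OF g sgen_perm[OF jn]])
    have img1: "g1 ` {..i} = sgen j ` A" unfolding g1_def A_def by (simp add: image_comp)
    have inA: "g x \<in> A \<longleftrightarrow> x \<le> i" for x
      unfolding A_def using permutes_inj[OF g] by (auto dest: injD)
    have b1: "blockinc n i g1" unfolding blockinc_def
    proof (intro allI impI)
      fix j' assume j': "Suc j' < n \<and> j' \<noteq> i"
      have lt: "g j' < g (Suc j')" using b j' unfolding blockinc_def by blast
      have ne: "g j' \<noteq> g (Suc j')" using lt by simp
      have iff: "j' \<le> i \<longleftrightarrow> Suc j' \<le> i" using j' by linarith
      have same: "(g j' \<in> A) = (g (Suc j') \<in> A)" unfolding inA using iff .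
      have n1: "\<not> (g j' = j \<and> g (Suc j') = Suc j)"
      proof
        assume "g j' = j \<and> g (Suc j') = Suc j"
        then show False using same jA sjA by simp
      qed
      have n2: "\<not> (g j' = Suc j \<and> g (Suc j') = j)" using lt by auto
      show "g1 j' < g1 (Suc j')" unfolding g1_def using sgen_order[OF ne n1 n2] lt by simp
    qed
    let ?p = "inv g j" and ?q = "inv g (Suc j)"
    have pq: "g ?p = j" "g ?q = Suc j" "?q < n" using permutes_inverses[OF g] perm_inv_lt[OF g jn] by auto
    have "?p \<le> i" "\<not> ?q \<le> i" using inA[of ?p] inA[of ?q] pq jA sjA by auto
    then have "?p < ?q" by simp
    have ninv1: "ninv n g1 = Suc (ninv n g)" unfolding g1_def
      by (rule ninv_sgen_left[OF g \<open>?p < ?q\<close> pq(3) pq(1) pq(2)])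
    have Gs1: "Gs (g1 ` {..i}) c = Gs A c + (if c = Suc j then 1 else 0)" for c
      unfolding img1 by (rule Gs_sgen[OF fA(1) jA sjA])
    have G1: "\<forall>c. Gs (g1 ` {..i}) c \<le> Gs (g' ` {..i}) c"
    proof
      fix c show "Gs (g1 ` {..i}) c \<le> Gs (g' ` {..i}) c"
        using Gs1[of c] c0 j G unfolding A_def A'_def by (cases "c = Suc j") auto
    qed
    have s1: "(\<Sum>c\<le>n. Gs (g1 ` {..i}) c) = (\<Sum>c\<le>n. Gs A c) + 1"
    proof -
      have "(\<Sum>c\<le>n. Gs (g1 ` {..i}) c) = (\<Sum>c\<le>n. Gs A c + (if c = Suc j then 1 else 0))"
        using Gs1 by simp
      also have "\<dots> = (\<Sum>c\<le>n. Gs A c) + (\<Sum>c\<le>n. (if c = Suc j then 1 else 0))"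
        by (simp add: sum.distrib)
      also have "(\<Sum>c\<le>n. (if c = Suc j then 1 else 0::nat)) = 1" using jn by simp
      finally show ?thesis .
    qed
    have s2: "(\<Sum>c\<le>n. Gs (g1 ` {..i}) c) \<le> (\<Sum>c\<le>n. Gs A' c)"
      using G1 unfolding A'_def by (intro sum_mono) auto
    have "(\<Sum>c\<le>n. Gs (g' ` {..i}) c) - (\<Sum>c\<le>n. Gs (g1 ` {..i}) c)
        < (\<Sum>c\<le>n. Gs (g' ` {..i}) c) - (\<Sum>c\<le>n. Gs (g ` {..i}) c)"
      using s1 s2 unfolding A_def A'_def by simp
    then have IH: "lchain n k g1 g' \<and> (g1 = g' \<or> ninv n g1 < ninv n g')"
      by (rule less.hyps[OF _ g1 g' b1 b' i G1])
    have cl: "clen n g < clen n g1" using clen_eq[OF g] clen_eq[OF g1] ninv1 by simp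
    have tr: "sgen j \<in> refls n" using transp_in_refls[of j "Suc j" n] jn by (simp add: sgen_def)
    have bl: "bruhat_le n g (sgen j \<circ> g)"
      unfolding bruhat_le_def Sn_def using g g1 tr cl unfolding g1_def by auto
    have bless: "bruhat_less n g (sgen j \<circ> g)"
      unfolding bruhat_less_def using bl ninv1 unfolding g1_def by auto
    have "lchain n k g g'"
      by (rule lchain.step[OF sgen_Tk[OF jn] bless]) (use IH g1_def in simp)
    moreover have "ninv n g < ninv n g'" using IH ninv1 by auto
    ultimately show ?thesis by simp
  qed
qed


lemma perm_eq_prefix:
  assumes u: "u permutes {..<n}" and v: "v permutes {..<n}"
    and pre: "\<And>i. Suc i < n \<Longrightarrow> u ` {..i} = v ` {..i}"
  shows "u = v"
proof
  fix x
  have all: "u ` {..x} = v ` {..x}" if "x < n" for x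
  proof (cases "Suc x < n")
    case True then show ?thesis using pre by simp
  next
    case False
    then have "{..x} = {..<n}" using that by auto
    then show ?thesis using permutes_image[OF u] permutes_image[OF v] by simp
  qed
  show "u x = v x"
  proof (cases "x < n")
    case False then show ?thesis using permutes_not_in[OF u] permutes_not_in[OF v] by simp
  next
    case True
    have lo: "u ` {..<x} = v ` {..<x}"
    proof (cases x)
      case 0 then show ?thesis by simp
    next
      case (Suc m)
      then have "{..<x} = {..m}" by auto
      then show ?thesis using all[of m] True Suc by simp
    qed
    have "{..x} = insert x {..<x}" by auto
    then have "insert (u x) (u ` {..<x}) = insert (v x) (v ` {..<x})"
      using all[OF True] by simp
    moreover have "u x \<notin> u ` {..<x}" using permutes_inj[OF u] by (auto dest: injD)
    moreover have "v x \<notin> v ` {..<x}" using permutes_inj[OF v] by (auto dest: injD)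
    ultimately show ?thesis using lo by blast
  qed
qed

abbreviation PP :: "nat \<Rightarrow> nat \<Rightarrow> (nat \<Rightarrow> nat) \<Rightarrow> nat \<Rightarrow> nat" where
  "PP n i w \<equiv> PJ n (gens n - {sgen i}) w"

lemma phi_nth: "i < n - 1 \<Longrightarrow> phi n w ! i = PP n i w"
  by (simp add: phi_def)

lemma phi_len: "length (phi n w) = n - 1" by (simp add: phi_def)

lemma level_iff:
  assumes u: "u permutes {..<n}" and v: "v permutes {..<n}" and i: "Suc i < n"
  shows "(\<forall>c. Gs (u ` {..i}) c \<le> Gs (v ` {..i}) c) \<longleftrightarrow> lek n k (PP n i u) (PP n i v)"
proof -
  have pu: "PP n i u permutes {..<n}" "blockinc n i (PP n i u)" "PP n i u ` {..i} = u ` {..i}"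
    using PJ_props[OF u i] by auto
  have pv: "PP n i v permutes {..<n}" "blockinc n i (PP n i v)" "PP n i v ` {..i} = v ` {..i}"
    using PJ_props[OF v i] by auto
  show ?thesis
  proof
    assume G: "\<forall>c. Gs (u ` {..i}) c \<le> Gs (v ` {..i}) c"
    have "lchain n k (PP n i u) (PP n i v) \<and> (PP n i u = PP n i v \<or> ninv n (PP n i u) < ninv n (PP n i v))"
      by (rule grass_chain[OF pu(1) pv(1) pu(2) pv(2) i]) (use G pu(3) pv(3) in simp)
    then show "lek n k (PP n i u) (PP n i v)"
      unfolding lek_def Sn_def using pu(1) pv(1) clen_eq[OF pu(1)] clen_eq[OF pv(1)] by auto
  next
    assume "lek n k (PP n i u) (PP n i v)"
    then have "tab_le n (PP n i u) (PP n i v)" by (intro bruhat_tab lek_bruhat)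
    then have "tabr n (PP n i u) i c \<le> tabr n (PP n i v) i c" for c by (simp add: tab_le_def)
    then show "\<forall>c. Gs (u ` {..i}) c \<le> Gs (v ` {..i}) c"
      using tabr_level[OF pu(1)] tabr_level[OF pv(1)] i pu(3) pv(3) by simp
  qed
qed

lemma main_iff:
  assumes u: "u permutes {..<n}" and v: "v permutes {..<n}"
  shows "bruhat_le n u v \<longleftrightarrow> (\<forall>i. Suc i < n \<longrightarrow> lek n k (PP n i u) (PP n i v))"
proof -
  have "bruhat_le n u v \<longleftrightarrow> tab_le n u v" by (rule bruhat_iff_tab[OF u v])
  also have "\<dots> \<longleftrightarrow> (\<forall>i. Suc i < n \<longrightarrow> (\<forall>c. Gs (u ` {..i}) c \<le> Gs (v ` {..i}) c))"
  proof
    assume "tab_le n u v"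
    then show "\<forall>i. Suc i < n \<longrightarrow> (\<forall>c. Gs (u ` {..i}) c \<le> Gs (v ` {..i}) c)"
      unfolding tab_le_def using tabr_level[OF u] tabr_level[OF v] by (metis Suc_lessD)
  next
    assume a: "\<forall>i. Suc i < n \<longrightarrow> (\<forall>c. Gs (u ` {..i}) c \<le> Gs (v ` {..i}) c)"
    show "tab_le n u v" unfolding tab_le_def
    proof (intro allI)
      fix i c
      show "tabr n u i c \<le> tabr n v i c"
      proof (cases "Suc i < n")
        case True then show ?thesis using a tabr_level[OF u] tabr_level[OF v] by (metis Suc_lessD)
      next
        case False then show ?thesis using tabr_top[OF u] tabr_top[OF v] by simp
      qed
    qed
  qed
  also have "\<dots> \<longleftrightarrow> (\<forall>i. Suc i < n \<longrightarrow> lek n k (PP n i u) (PP n i v))"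
    using level_iff[OF u v] by blast
  finally show ?thesis .
qed

theorem proposition3p11:
  fixes n k :: nat
  assumes "n \<ge> 2"
  shows "\<exists>f. bij_betw f (Sn n) (phi n ` Sn n) \<and>
           (\<forall>u\<in>Sn n. \<forall>v\<in>Sn n. bruhat_le n u v \<longleftrightarrow> list_all2 (lek n k) (f u) (f v))"
proof (intro exI conjI)
  show "bij_betw (phi n) (Sn n) (phi n ` Sn n)"
  proof (rule inj_on_imp_bij_betw, rule inj_onI)
    fix u v assume uS: "u \<in> Sn n" and vS: "v \<in> Sn n" and e: "phi n u = phi n v"
    have u: "u permutes {..<n}" and v: "v permutes {..<n}" using uS vS by (auto simp: Sn_def)
    show "u = v"
    proof (rule perm_eq_prefix[OF u v])
      fix i assume i: "Suc i < n"
      then have "PP n i u = PP n i v" using e phi_nth[of i n] by (metis Suc_lessE diff_Suc_1 less_diff_conv Suc_less_eq add_Suc_right add_0_right)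
      then show "u ` {..i} = v ` {..i}" using PJ_props[OF u i] PJ_props[OF v i] by simp
    qed
  qed
  show "\<forall>u\<in>Sn n. \<forall>v\<in>Sn n. bruhat_le n u v \<longleftrightarrow> list_all2 (lek n k) (phi n u) (phi n v)"
  proof (intro ballI)
    fix u v assume uS: "u \<in> Sn n" and vS: "v \<in> Sn n"
    have u: "u permutes {..<n}" and v: "v permutes {..<n}" using uS vS by (auto simp: Sn_def)
    have "list_all2 (lek n k) (phi n u) (phi n v) \<longleftrightarrow> (\<forall>i<n-1. lek n k (phi n u ! i) (phi n v ! i))"
      by (simp add: list_all2_conv_all_nth phi_len)
    also have "\<dots> \<longleftrightarrow> (\<forall>i. Suc i < n \<longrightarrow> lek n k (PP n i u) (PP n i v))"
      using phi_nth by (auto simp: less_diff_conv)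
    finally show "bruhat_le n u v \<longleftrightarrow> list_all2 (lek n k) (phi n u) (phi n v)"
      using main_iff[OF u v] by simp
  qed
qed

end
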